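(* Let $M\ge2$ and let $J_1,\dots,J_{M-1}$, $\mu_1,\dots,\mu_M$, $h_1^z,\dots,h_M^z$ be real numbers. On the open chain of $M$ sites consider $$H=\sum_{m=1}^{M-1}\Big(J_m c_{m+1}^\dagger c_m\sigma_{m+1}^+ + \text{h.c.}\Big)+\sum_{m=1}^{M}\mu_m c_m^\dagger c_m+\sum_{m=1}^M h_m^z\sigma_m^z.$$ For every number $\alpha$, the operator $$Q^{(\exp)}(\alpha)=\sum_{m=1}^{M}\Big[\alpha^m c_m^\dagger c_m+\alpha^{m-1}(1-\alpha)\frac{\sigma_m^z+1}{2}\Big]$$ commutes with $H$.
   Context: Each site $m$ carries one spinless fermion mode ($c_m,c_m^\dagger$, canonical anticommutation relations) and one spin-$1/2$ with Pauli matrices $\sigma_m^{x,y,z}$; $\sigma_m^{\pm}=\sigma_m^x\pm i\sigma_m^y$, so that $\sigma_m^+$ raises $\sigma_m^z$. *)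

theory Defs
  imports Complex_Main
begin

text \<open>Hilbert space of the open chain of M sites: orthonormal basis indexed by
  configurations, lists of length M; entry k (0-based, i.e. site k+1) is a pair
  (fermion occupied?, spin up?).\<close>

type_synonym cfg = "(bool \<times> bool) list"
type_synonym op = "cfg \<Rightarrow> cfg \<Rightarrow> complex"

definition cfgs :: "nat \<Rightarrow> cfg set" where
  "cfgs M = {xs. length xs = M}"

definition opmul :: "nat \<Rightarrow> op \<Rightarrow> op \<Rightarrow> op" where
  "opmul M A B = (\<lambda>x y. \<Sum>z\<in>cfgs M. A x z * B z y)"

definition adj :: "op \<Rightarrow> op" where
  "adj A = (\<lambda>x y. cnj (A y x))"

definition idop :: op where
  "idop = (\<lambda>x y. if x = y then 1 else 0)"

text \<open>Fermion annihilation operator at site m (1-based), Jordan-Wigner ordering by site.\<close>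
definition cann :: "nat \<Rightarrow> op" where
  "cann m = (\<lambda>x y. if fst (y ! (m-1)) \<and> x = y[m-1 := (False, snd (y ! (m-1)))]
      then (-1) ^ length (filter fst (take (m-1) y)) else 0)"

definition ccre :: "nat \<Rightarrow> op" where
  "ccre m = adj (cann m)"

definition flipspin :: "nat \<Rightarrow> cfg \<Rightarrow> cfg" where
  "flipspin m y = y[m-1 := (fst (y ! (m-1)), \<not> snd (y ! (m-1)))]"

text \<open>Pauli matrices at site m; spin up = True is the +1 eigenvector of sigma z.\<close>
definition sigx :: "nat \<Rightarrow> op" where
  "sigx m = (\<lambda>x y. if x = flipspin m y then 1 else 0)"

definition sigy :: "nat \<Rightarrow> op" where
  "sigy m = (\<lambda>x y. if x = flipspin m y then (if snd (y ! (m-1)) then \<i> else - \<i>) else 0)"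

definition sigz :: "nat \<Rightarrow> op" where
  "sigz m = (\<lambda>x y. if x = y then (if snd (y ! (m-1)) then 1 else -1) else 0)"

definition sigp :: "nat \<Rightarrow> op" where
  "sigp m = (\<lambda>x y. sigx m x y + \<i> * sigy m x y)"

definition numop :: "nat \<Rightarrow> nat \<Rightarrow> op" where
  "numop M m = opmul M (ccre m) (cann m)"

definition hop :: "nat \<Rightarrow> nat \<Rightarrow> op" where
  "hop M m = opmul M (opmul M (ccre (m+1)) (cann m)) (sigp (m+1))"

definition Ham :: "nat \<Rightarrow> (nat \<Rightarrow> real) \<Rightarrow> (nat \<Rightarrow> real) \<Rightarrow> (nat \<Rightarrow> real) \<Rightarrow> op" where
  "Ham M J mu hz = (\<lambda>x y.
      (\<Sum>m=1..M-1. complex_of_real (J m) * hop M m x y + adj (\<lambda>a b. complex_of_real (J m) * hop M m a b) x y)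
    + (\<Sum>m=1..M. complex_of_real (mu m) * numop M m x y)
    + (\<Sum>m=1..M. complex_of_real (hz m) * sigz m x y))"

definition Qexp :: "nat \<Rightarrow> complex \<Rightarrow> op" where
  "Qexp M \<alpha> = (\<lambda>x y. \<Sum>m=1..M.
      \<alpha> ^ m * numop M m x y + \<alpha> ^ (m-1) * (1 - \<alpha>) * ((sigz m x y + idop x y) / 2))"

end

theory Submission
  imports Defs
begin

definition fq :: "complex \<Rightarrow> nat \<Rightarrow> bool \<times> bool \<Rightarrow> complex" where
  "fq \<alpha> m p = \<alpha> ^ m * (if fst p then 1 else 0) + \<alpha> ^ (m-1) * (1 - \<alpha>) * (if snd p then 1 else 0)"

definition qv :: "complex \<Rightarrow> nat \<Rightarrow> cfg \<Rightarrow> complex" where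
  "qv \<alpha> M x = (\<Sum>m=1..M. fq \<alpha> m (x ! (m-1)))"

lemma finite_cfgs: "finite (cfgs M)"
proof -
  have "finite {xs. set xs \<subseteq> (UNIV :: (bool\<times>bool) set) \<and> length xs = M}"
    by (rule finite_lists_length_eq) simp
  then show ?thesis unfolding cfgs_def by simp
qed

lemma numop_eq:
  assumes x: "x \<in> cfgs M" and y: "y \<in> cfgs M" and m: "1 \<le> m" "m \<le> M"
  shows "numop M m x y = (if x = y \<and> fst (x ! (m-1)) then 1 else 0)"
proof -
  define z0 where "z0 = y[m-1 := (False, snd (y ! (m-1)))]"
  have z0c: "z0 \<in> cfgs M" using y unfolding z0_def cfgs_def by simp
  have "numop M m x y = (\<Sum>z\<in>cfgs M. if z = z0 then ccre m x z * cann m z y else 0)"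
    unfolding numop_def opmul_def
    by (rule sum.cong) (auto simp: cann_def z0_def)
  also have "\<dots> = ccre m x z0 * cann m z0 y" using z0c finite_cfgs by simp
  also have "\<dots> = (if x = y \<and> fst (x ! (m-1)) then 1 else 0)"
  proof (cases "fst (y ! (m-1))")
    case True
    have lx: "length x = M" and ly: "length y = M" using x y by (auto simp: cfgs_def)
    have tk: "take (m-1) z0 = take (m-1) y" unfolding z0_def by simp
    have e: "(fst (x ! (m-1)) \<and> z0 = x[m-1 := (False, snd (x ! (m-1)))]) = (x = y)"
    proof
      assume a: "fst (x ! (m-1)) \<and> z0 = x[m-1 := (False, snd (x ! (m-1)))]"
      show "x = y"
      proof (rule nth_equalityI)
        show "length x = length y" using lx ly by simp
        fix i assume i: "i < length x"
        show "x ! i = y ! i"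
        proof (cases "i = m-1")
          case True
          have "z0 ! i = (False, snd (y ! (m-1)))" using True i lx ly unfolding z0_def by simp
          moreover have "z0 ! i = (False, snd (x ! (m-1)))" using a True i by simp
          ultimately have "snd (x ! (m-1)) = snd (y ! (m-1))" by simp
          then show ?thesis using a \<open>fst (y ! (m-1))\<close> True
            by (simp add: prod_eq_iff)
        next
          case False
          have "z0 ! i = y ! i" using False unfolding z0_def by simp
          moreover have "z0 ! i = x ! i" using a False by simp
          ultimately show ?thesis by simp
        qed
      qed
    next
      assume "x = y" then show "fst (x ! (m-1)) \<and> z0 = x[m-1 := (False, snd (x ! (m-1)))]"
        using True unfolding z0_def by simp
    qed
    have "ccre m x z0 = (if x = y then cnj ((-1) ^ length (filter fst (take (m-1) z0))) else 0)"
      unfolding ccre_def adj_def cann_def using e by auto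
    moreover have "cann m z0 y = (-1) ^ length (filter fst (take (m-1) y))"
      unfolding cann_def z0_def using True by simp
    ultimately show ?thesis using True tk
      by (auto simp: power_mult_distrib[symmetric])
  next
    case False
    then show ?thesis by (auto simp: cann_def)
  qed
  finally show ?thesis .
qed

lemma Q_diag:
  assumes x: "x \<in> cfgs M" and y: "y \<in> cfgs M"
  shows "Qexp M \<alpha> x y = (if x = y then qv \<alpha> M x else 0)"
proof (cases "x = y")
  case True
  show ?thesis unfolding Qexp_def qv_def True
    by (auto intro!: sum.cong simp: numop_eq[OF y y] fq_def sigz_def idop_def)
next
  case False
  show ?thesis unfolding Qexp_def using False
    by (auto intro!: sum.neutral simp: numop_eq[OF x y] sigz_def idop_def)
qed

lemma Ham_off:
  assumes x: "x \<in> cfgs M" and y: "y \<in> cfgs M" and ne: "x \<noteq> y"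
  shows "Ham M J mu hz x y = (\<Sum>m=1..M-1. complex_of_real (J m) * hop M m x y
      + cnj (complex_of_real (J m) * hop M m y x))"
proof -
  have a: "(\<Sum>m=1..M. complex_of_real (mu m) * numop M m x y) = 0"
    using ne by (auto intro!: sum.neutral simp: numop_eq[OF x y])
  have b: "(\<Sum>m=1..M. complex_of_real (hz m) * sigz m x y) = 0"
    using ne by (auto intro!: sum.neutral simp: sigz_def)
  show ?thesis unfolding Ham_def a b adj_def by simp
qed

lemma sum_two:
  fixes g h :: "nat \<Rightarrow> complex"
  assumes "i \<in> {1..M}" "j \<in> {1..M}" "i \<noteq> j" "\<forall>k\<in>{1..M}. k \<noteq> i \<and> k \<noteq> j \<longrightarrow> g k = h k"
  shows "(\<Sum>k=1..M. g k) = (\<Sum>k=1..M. h k) + (g i - h i) + (g j - h j)"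
proof -
  have "(\<Sum>k=1..M. g k - h k) = (\<Sum>k\<in>{i,j}. g k - h k)"
    by (rule sum.mono_neutral_right) (use assms in auto)
  also have "\<dots> = (g i - h i) + (g j - h j)" using assms(3) by simp
  finally show ?thesis by (simp add: sum_subtractf algebra_simps)
qed

lemma hop_q:
  assumes x: "x \<in> cfgs M" and y: "y \<in> cfgs M" and m: "1 \<le> m" "m < M"
    and nz: "hop M m x y \<noteq> 0"
  shows "qv \<alpha> M x = qv \<alpha> M y"
proof -
  have lx: "length x = M" and ly: "length y = M" using x y by (auto simp: cfgs_def)
  obtain z where "z \<in> cfgs M" and
    zz: "(\<Sum>w\<in>cfgs M. ccre (m+1) x w * cann m w z) * sigp (m+1) z y \<noteq> 0"
    using nz unfolding hop_def opmul_def by (meson sum.not_neutral_contains_not_neutral)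
  then have sp: "sigp (m+1) z y \<noteq> 0" and "(\<Sum>w\<in>cfgs M. ccre (m+1) x w * cann m w z) \<noteq> 0"
    by auto
  then obtain w where "ccre (m+1) x w * cann m w z \<noteq> 0"
    by (meson sum.not_neutral_contains_not_neutral)
  then have c1: "cann (m+1) w x \<noteq> 0" and c2: "cann m w z \<noteq> 0"
    by (auto simp: ccre_def adj_def)
  have zdef: "z = y[m := (fst (y ! m), True)]" and yd: "\<not> snd (y ! m)"
    using sp by (auto simp: sigp_def sigx_def sigy_def flipspin_def split: if_splits)
  have zf: "fst (z ! (m-1))" and wz: "w = z[m-1 := (False, snd (z ! (m-1)))]"
    using c2 by (auto simp: cann_def split: if_splits)
  have xf: "fst (x ! m)" and wx: "w = x[m := (False, snd (x ! m))]"
    using c1 by (auto simp: cann_def split: if_splits)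
  have mm: "m - 1 \<noteq> m" using m by simp
  have oth: "\<forall>k<M. k \<noteq> m-1 \<and> k \<noteq> m \<longrightarrow> x ! k = y ! k"
  proof (intro allI impI)
    fix k assume k: "k < M" "k \<noteq> m-1 \<and> k \<noteq> m"
    have "x ! k = w ! k" using wx k by simp
    also have "\<dots> = z ! k" using wz k by simp
    also have "\<dots> = y ! k" using zdef k by simp
    finally show "x ! k = y ! k" .
  qed
  have zm1: "z ! (m-1) = y ! (m-1)" using zdef mm by simp
  have wm1: "w ! (m-1) = (False, snd (y ! (m-1)))" using wz zm1 zdef ly m by simp
  have xm1: "x ! (m-1) = (False, snd (y ! (m-1)))" using wx wm1 mm by simp
  have ym1: "fst (y ! (m-1))" using zf zm1 by simp
  have wm: "w ! m = (fst (y ! m), True)" using wz zdef mm ly m by simp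
  have wm': "w ! m = (False, snd (x ! m))" using wx lx m by simp
  have xm: "x ! m = (True, True)" using wm wm' xf by (simp add: prod_eq_iff)
  have ym: "y ! m = (False, False)" using wm wm' yd by (simp add: prod_eq_iff)
  have "qv \<alpha> M x = qv \<alpha> M y + (fq \<alpha> m (x ! (m-1)) - fq \<alpha> m (y ! (m-1)))
        + (fq \<alpha> (m+1) (x ! (m+1-1)) - fq \<alpha> (m+1) (y ! (m+1-1)))"
    unfolding qv_def
  proof (rule sum_two)
    show "\<forall>k\<in>{1..M}. k \<noteq> m \<and> k \<noteq> m + 1 \<longrightarrow>
        fq \<alpha> k (x ! (k - 1)) = fq \<alpha> k (y ! (k - 1))"
    proof (intro ballI impI)
      fix k assume k: "k \<in> {1..M}" "k \<noteq> m \<and> k \<noteq> m + 1"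
      have "k - 1 < M" "k - 1 \<noteq> m - 1" "k - 1 \<noteq> m" using k m by auto
      then have "x ! (k-1) = y ! (k-1)" using oth by blast
      then show "fq \<alpha> k (x ! (k - 1)) = fq \<alpha> k (y ! (k - 1))" by simp
    qed
  qed (use m in auto)
  also have "\<dots> = qv \<alpha> M y"
  proof -
    obtain s where s: "snd (y ! (m-1)) = s" by simp
    have "fq \<alpha> m (x ! (m-1)) - fq \<alpha> m (y ! (m-1)) = -(\<alpha> ^ m)"
      using xm1 ym1 by (simp add: fq_def)
    moreover have "fq \<alpha> (m+1) (x ! (m+1-1)) - fq \<alpha> (m+1) (y ! (m+1-1)) = \<alpha> ^ m"
      using xm ym by (simp add: fq_def algebra_simps)
    ultimately show ?thesis by simp
  qed
  finally show ?thesis .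
qed

lemma comm_entry:
  assumes x: "x \<in> cfgs M" and y: "y \<in> cfgs M"
  shows "Ham M J mu hz x y * qv \<alpha> M y = qv \<alpha> M x * Ham M J mu hz x y"
proof (cases "x = y")
  case True then show ?thesis by simp
next
  case False
  have "Ham M J mu hz x y * qv \<alpha> M y = (\<Sum>m=1..M-1. (complex_of_real (J m) * hop M m x y
      + cnj (complex_of_real (J m) * hop M m y x)) * qv \<alpha> M y)"
    unfolding Ham_off[OF x y False] by (simp add: sum_distrib_right)
  also have "\<dots> = (\<Sum>m=1..M-1. qv \<alpha> M x * (complex_of_real (J m) * hop M m x y
      + cnj (complex_of_real (J m) * hop M m y x)))"
  proof (rule sum.cong)
    fix m assume m: "m \<in> {1..M-1}"
    then have m': "1 \<le> m" "m < M" by auto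
    have e1: "hop M m x y * qv \<alpha> M y = qv \<alpha> M x * hop M m x y"
      using hop_q[OF x y m', of \<alpha>] by (cases "hop M m x y = 0") auto
    have e2: "cnj (hop M m y x) * qv \<alpha> M y = qv \<alpha> M x * cnj (hop M m y x)"
      using hop_q[OF y x m', of \<alpha>] by (cases "hop M m y x = 0") auto
    show "(complex_of_real (J m) * hop M m x y + cnj (complex_of_real (J m) * hop M m y x)) * qv \<alpha> M y
      = qv \<alpha> M x * (complex_of_real (J m) * hop M m x y + cnj (complex_of_real (J m) * hop M m y x))"
      using e1 e2 by (auto simp: algebra_simps)
  qed simp
  also have "\<dots> = qv \<alpha> M x * Ham M J mu hz x y"
    unfolding Ham_off[OF x y False] by (simp add: sum_distrib_left)
  finally show ?thesis .
qed

theorem mainTheorem6: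
  fixes M :: nat and J mu hz :: "nat \<Rightarrow> real" and \<alpha> :: complex
  assumes "M \<ge> 2"
  shows "\<forall>x\<in>cfgs M. \<forall>y\<in>cfgs M.
           opmul M (Ham M J mu hz) (Qexp M \<alpha>) x y = opmul M (Qexp M \<alpha>) (Ham M J mu hz) x y"
proof (intro ballI)
  fix x y assume x: "x \<in> cfgs M" and y: "y \<in> cfgs M"
  have "opmul M (Ham M J mu hz) (Qexp M \<alpha>) x y
      = (\<Sum>z\<in>cfgs M. if z = y then Ham M J mu hz x y * qv \<alpha> M y else 0)"
    unfolding opmul_def by (rule sum.cong) (auto simp: Q_diag[OF _ y])
  also have "\<dots> = Ham M J mu hz x y * qv \<alpha> M y" using y finite_cfgs by simp
  also have "\<dots> = qv \<alpha> M x * Ham M J mu hz x y" by (rule comm_entry[OF x y])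
  also have "\<dots> = (\<Sum>z\<in>cfgs M. if z = x then qv \<alpha> M x * Ham M J mu hz x y else 0)"
    using x finite_cfgs by simp
  also have "\<dots> = opmul M (Qexp M \<alpha>) (Ham M J mu hz) x y"
    unfolding opmul_def by (rule sum.cong) (auto simp: Q_diag[OF x])
  finally show "opmul M (Ham M J mu hz) (Qexp M \<alpha>) x y = opmul M (Qexp M \<alpha>) (Ham M J mu hz) x y" .
qed

end
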